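(* For any $\beta\in[0,\infty)$ there exists a weight sequence $\boldsymbol{M}^\beta$ such that: (i) $\boldsymbol{M}^\beta$ does not satisfy $\operatorname{(sm)}$ (and hence not $\operatorname{(dc)}$ either); (ii) $\gamma(\boldsymbol{M}^\beta)=\beta$.
   Context: A weight sequence is a sequence $\boldsymbol{M}=(M_p)_{p\in\mathbb{N}_0}$ of positive reals with $M_0=1$, $M_p^2\le M_{p-1}M_{p+1}$ ($p\ge1$) and $m_p=M_{p+1}/M_p\to\infty$. $\operatorname{(sm)}$: $\log(m_{p+1}/m_p)\le C_0H^{p+1}$ for all $p$, some $C_0>0$, $H>1$. $\operatorname{(dc)}$: $M_{p+1}\le C_0H^{p+1}M_p$ for all $p$, some $C_0>0$, $H>1$. Almost increasing: $c_p\le ac_q$ for $q\ge p$, some $a>0$. $\gamma(\boldsymbol{M})=\sup\{\mu>0:(m_p/(p+1)^\mu)_p\text{ almost increasing}\}\in[0,\infty]$. *)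

theory Defs
  imports Complex_Main "HOL-Library.Extended_Real"
begin

definition quot_seq :: "(nat \<Rightarrow> real) \<Rightarrow> nat \<Rightarrow> real" where
  "quot_seq M p = M (Suc p) / M p"

definition weight_sequence :: "(nat \<Rightarrow> real) \<Rightarrow> bool" where
  "weight_sequence M \<longleftrightarrow>
     (\<forall>p. M p > 0) \<and> M 0 = 1 \<and>
     (\<forall>p\<ge>1. (M p)^2 \<le> M (p - 1) * M (p + 1)) \<and>
     filterlim (quot_seq M) at_top sequentially"

definition cond_sm :: "(nat \<Rightarrow> real) \<Rightarrow> bool" where
  "cond_sm M \<longleftrightarrow> (\<exists>C0>0. \<exists>H>1. \<forall>p.
     ln (quot_seq M (p + 1) / quot_seq M p) \<le> C0 * H ^ (p + 1))"

definition cond_dc :: "(nat \<Rightarrow> real) \<Rightarrow> bool" where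
  "cond_dc M \<longleftrightarrow> (\<exists>C0>0. \<exists>H>1. \<forall>p. M (p + 1) \<le> C0 * H ^ (p + 1) * M p)"

definition almost_increasing :: "(nat \<Rightarrow> real) \<Rightarrow> bool" where
  "almost_increasing c \<longleftrightarrow> (\<exists>a>0. \<forall>p q. p \<le> q \<longrightarrow> c p \<le> a * c q)"

text \<open>gamma index; the supremum of the empty set is taken to be 0 (value range [0,\<infinity>]).\<close>
definition gamma_idx :: "(nat \<Rightarrow> real) \<Rightarrow> ereal" where
  "gamma_idx M = Sup (insert 0 (ereal ` {\<mu>. \<mu> > 0 \<and>
     almost_increasing (\<lambda>p. quot_seq M p / (real p + 1) powr \<mu>)}))"

end

theory Submission
  imports Defs "HOL-Real_Asymp.Real_Asymp"
begin

definition qq :: "nat \<Rightarrow> nat" where "qq k = fact (Suc k)"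
definition WW :: "nat \<Rightarrow> real" where "WW k = exp ((real (qq k) + 1)^2)"
definition TT :: "nat \<Rightarrow> real" where "TT p = (\<Sum>j\<in>{j. qq j < p}. WW j)"
definition mm :: "real \<Rightarrow> nat \<Rightarrow> real" where "mm b p = (real p + 1) powr b * exp (TT p)"
definition MM :: "real \<Rightarrow> nat \<Rightarrow> real" where "MM b p = (\<Prod>i<p. mm b i)"

lemma qq_sm: "strict_mono qq"
unfolding strict_mono_Suc_iff
proof
  fix k
  have "fact (Suc k) > (0::nat)" by simp
  then show "qq k < qq (Suc k)" unfolding qq_def by (simp add: fact_Suc[of "Suc k"])
qed

lemma qq_ge: "j < qq j"
proof -
  have "Suc j \<le> fact (Suc j)" by (rule fact_ge_self)
  then show ?thesis unfolding qq_def by simp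
qed

lemma qq_ratio: "real (qq (Suc k) + 1) / real (qq k + 2) \<ge> (real k + 2) / 3"
proof -
  have e: "qq (Suc k) = (k+2) * qq k" unfolding qq_def by (simp add: fact_Suc[of "Suc k"])
  define x where "x = real (qq k)"
  have pos: "x \<ge> 1" using qq_ge[of k] unfolding x_def by simp
  have e1: "real (qq (Suc k) + 1) = (real k + 2) * x + 1" unfolding e x_def by (simp add: algebra_simps)
  have e2: "real (qq k + 2) = x + 2" unfolding x_def by simp
  define y where "y = (real k + 2) * x"
  have n: "(real k + 2) * (x - 1) \<ge> 0" using pos by simp
  have d1: "(real k + 2) * (x - 1) = y - (real k + 2)" unfolding y_def by (simp add: algebra_simps)
  have d2: "(real k + 2) * (x + 2) = y + 2 * (real k + 2)" unfolding y_def by (simp add: algebra_simps)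
  have yy: "y \<ge> real k + 2" using n unfolding d1 by simp
  have "y + 2 * (real k + 2) \<le> 3 * (y + 1)" using yy by simp
  then have "(real k + 2) * (x + 2) \<le> 3 * ((real k + 2) * x + 1)" using d2 unfolding y_def by linarith
  then show ?thesis unfolding e1 e2 using pos by (simp add: field_simps)
qed

lemma one_le_powr: "(x::real) \<ge> 1 \<Longrightarrow> b \<ge> 0 \<Longrightarrow> 1 \<le> x powr b"
  using powr_mono2[of b 1 x] by simp

lemma fin: "finite {j. qq j < p}"
  by (rule finite_subset[of _ "{..<p}"]) (use qq_ge less_trans in auto)

lemma TT_mono: "p \<le> p' \<Longrightarrow> TT p \<le> TT p'"
  unfolding TT_def
  by (rule sum_mono2[OF fin]) (auto simp: WW_def)

lemma set1: "{j. qq j < qq k + 1} = {..k}"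
  using strict_mono_less_eq[OF qq_sm] by (auto simp: less_Suc_eq_le)
lemma set2: "{j. qq j < qq (Suc k)} = {..k}"
  using strict_mono_less[OF qq_sm] by (auto simp: less_Suc_eq_le)
lemma set3: "{j. qq j < qq k} = {..<k}"
  using strict_mono_less[OF qq_sm] by auto

lemma TT_jump: "TT (qq k + 1) = TT (qq k) + WW k"
  unfolding TT_def set1 set3 by (simp add: lessThan_Suc_atMost[symmetric])

lemma TT_flat: "TT (qq k + 1) = TT (qq (Suc k))"
  unfolding TT_def set1 set2 by simp

lemma TT_ge: "TT (qq k + 1) \<ge> WW k"
proof -
  have "TT (qq k) \<ge> 0" unfolding TT_def by (auto intro: sum_nonneg simp: WW_def)
  then show ?thesis using TT_jump by simp
qed

lemma mm_pos: "mm b p > 0" unfolding mm_def by simp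

lemma mm_mono: "b \<ge> 0 \<Longrightarrow> p \<le> p' \<Longrightarrow> mm b p \<le> mm b p'"
  unfolding mm_def
  by (rule mult_mono) (auto intro: powr_mono2 TT_mono)

lemma quot_MM: "quot_seq (MM b) p = mm b p"
  unfolding quot_seq_def MM_def using mm_pos[of b]
  by (simp add: prod_pos less_imp_neq[symmetric])

lemma MM_pos: "MM b p > 0" unfolding MM_def using mm_pos by (simp add: prod_pos)

lemma key: assumes "C > 0" "H > 1" shows "\<exists>N. \<forall>n\<ge>N. C * H ^ (n+2) < exp ((real n + 1)^2)"
proof -
  have "((\<lambda>n::nat. C * H ^ (n+2) / exp ((real n + 1)^2)) \<longlongrightarrow> 0) sequentially"
    using assms by real_asymp
  then have "eventually (\<lambda>n. C * H ^ (n+2) / exp ((real n + 1)^2) < 1) sequentially"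
    by (rule order_tendstoD) simp
  then obtain N where "\<forall>n\<ge>N. C * H ^ (n+2) / exp ((real n + 1)^2) < 1"
    by (auto simp: eventually_sequentially)
  then show ?thesis by (auto simp: field_simps)
qed

lemma key2: assumes "C > 0" "H > 1" shows "\<exists>k. C * H ^ (qq k + 2) < WW k"
proof -
  obtain N where N: "\<forall>n\<ge>N. C * H ^ (n+2) < exp ((real n + 1)^2)" using key[OF assms] by blast
  have "qq N \<ge> N" using qq_ge[of N] by simp
  then show ?thesis using N unfolding WW_def by blast
qed

lemma ws: assumes "b \<ge> 0" shows "weight_sequence (MM b)"
  unfolding weight_sequence_def
proof (intro conjI allI impI)
  fix p show "MM b p > 0" by (rule MM_pos)
next
  show "MM b 0 = 1" unfolding MM_def by simp
next
  fix p :: nat assume "p \<ge> 1"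
  then obtain r where p: "p = Suc r" by (cases p) auto
  have e1: "MM b (Suc r) = MM b r * mm b r" unfolding MM_def by simp
  have e2: "MM b (Suc (Suc r)) = MM b r * mm b r * mm b (Suc r)" unfolding MM_def by simp
  have "mm b r \<le> mm b (Suc r)" using mm_mono[OF assms] by simp
  then have "(MM b r * mm b r) * (MM b r * mm b r) \<le> (MM b r * mm b r) * (MM b r * mm b (Suc r))"
    using MM_pos[of b r] mm_pos[of b r] by (intro mult_left_mono) auto
  then show "(MM b p)^2 \<le> MM b (p - 1) * MM b (p + 1)"
    unfolding p e1 using e2 by (simp add: power2_eq_square algebra_simps)
next
  show "filterlim (quot_seq (MM b)) at_top sequentially"
    unfolding quot_MM filterlim_at_top
  proof
    fix Z :: real
    obtain k where k: "WW k \<ge> Z"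
    proof -
      have "exp ((real (qq (nat \<lceil>Z\<rceil>)) + 1)^2) \<ge> (real (qq (nat \<lceil>Z\<rceil>)) + 1)^2"
        by (meson exp_ge_add_one_self le_add_same_cancel2 order_trans zero_le_one)
      moreover have "(real (qq (nat \<lceil>Z\<rceil>)) + 1)^2 \<ge> real (qq (nat \<lceil>Z\<rceil>)) + 1"
        by (simp add: power2_eq_square)
      moreover have "real (qq (nat \<lceil>Z\<rceil>)) \<ge> Z" using qq_ge[of "nat \<lceil>Z\<rceil>"]
        by (smt (verit, ccfv_SIG) le_nat_iff less_eq_real_def of_nat_less_iff real_nat_ceiling_ge)
      ultimately show ?thesis using that[of "nat \<lceil>Z\<rceil>"] unfolding WW_def by linarith
    qed
    show "eventually (\<lambda>p. Z \<le> mm b p) sequentially"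
      unfolding eventually_sequentially
    proof (intro exI allI impI)
      fix p assume "p \<ge> qq k + 1"
      then have "TT p \<ge> WW k" using TT_ge[of k] TT_mono by (meson order_trans)
      moreover have "exp (TT p) \<ge> TT p" by (meson exp_ge_add_one_self le_add_same_cancel2 order_trans zero_le_one)
      moreover have "(real p + 1) powr b \<ge> 1" using assms by (intro one_le_powr) auto
      moreover have "exp (TT p) > 0" by simp
      ultimately have "mm b p \<ge> exp (TT p)" unfolding mm_def
        by (simp add: mult_le_cancel_right1)
      then show "Z \<le> mm b p" using k \<open>TT p \<ge> WW k\<close> \<open>exp (TT p) \<ge> TT p\<close> by linarith
    qed
  qed
qed

lemma not_sm: assumes "b \<ge> 0" shows "\<not> cond_sm (MM b)"
proof
  assume "cond_sm (MM b)"
  then obtain C H where C: "C > 0" "H > 1" and h: "\<forall>p. ln (mm b (p+1) / mm b p) \<le> C * H ^ (p+1)"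
    unfolding cond_sm_def quot_MM by blast
  obtain k where k: "C * H ^ (qq k + 2) < WW k" using key2[OF C] by blast
  let ?p = "qq k"
  define R where "R = (real (?p+1) + 1) powr b / (real ?p + 1) powr b"
  have r: "mm b (?p+1) / mm b ?p = R * exp (WW k)"
    unfolding mm_def TT_jump R_def by (simp add: exp_add field_simps)
  have "(real ?p + 1) powr b \<le> (real (?p+1) + 1) powr b"
    using assms by (intro powr_mono2) auto
  then have R1: "R \<ge> 1" unfolding R_def by simp
  then have "ln (mm b (?p+1) / mm b ?p) = ln R + WW k"
    unfolding r by (simp add: ln_mult_pos)
  moreover have "ln R \<ge> 0" using R1 by simp
  ultimately have "ln (mm b (?p+1) / mm b ?p) \<ge> WW k" by linarith
  moreover have "C * H ^ (?p+1) \<le> C * H ^ (?p+2)" using C by simp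
  ultimately show False using h[rule_format, of ?p] k by linarith
qed

lemma not_dc: assumes "b \<ge> 0" shows "\<not> cond_dc (MM b)"
proof
  assume "cond_dc (MM b)"
  then obtain C H where C: "C > 0" "H > 1" and h: "\<forall>p. MM b (p + 1) \<le> C * H ^ (p + 1) * MM b p"
    unfolding cond_dc_def by blast
  obtain k where k: "C * H ^ (qq k + 2) < WW k" using key2[OF C] by blast
  let ?p = "qq k + 1"
  have "MM b (?p + 1) = MM b ?p * mm b ?p" unfolding MM_def by simp
  with h[rule_format, of ?p] MM_pos[of b ?p] have "mm b ?p \<le> C * H ^ (?p + 1)"
    by (simp add: mult.commute)
  moreover have "mm b ?p \<ge> exp (TT ?p)"
  proof -
    have "(real ?p + 1) powr b \<ge> 1" using assms by (intro one_le_powr) auto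
    then show ?thesis unfolding mm_def by (simp add: mult_le_cancel_right1)
  qed
  moreover have "exp (TT ?p) \<ge> TT ?p"
    by (meson exp_ge_add_one_self le_add_same_cancel2 order_trans zero_le_one)
  moreover note TT_ge[of k]
  ultimately show False using k by simp
qed

lemma c_eq: "mm b p / (real p + 1) powr \<mu> = (real p + 1) powr (b - \<mu>) * exp (TT p)"
  unfolding mm_def by (simp add: powr_diff)

lemma ai_le: assumes "0 \<le> b - \<mu>" shows "almost_increasing (\<lambda>p. quot_seq (MM b) p / (real p + 1) powr \<mu>)"
  unfolding almost_increasing_def quot_MM c_eq
proof (intro exI[of _ 1] conjI allI impI)
  fix p q :: nat assume "p \<le> q"
  then show "(real p + 1) powr (b - \<mu>) * exp (TT p) \<le> 1 * ((real q + 1) powr (b - \<mu>) * exp (TT q))"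
    using assms by (simp, intro mult_mono) (auto intro: powr_mono2 TT_mono)
qed simp

lemma ai_gt: assumes "b < \<mu>" shows "\<not> almost_increasing (\<lambda>p. quot_seq (MM b) p / (real p + 1) powr \<mu>)"
  unfolding almost_increasing_def quot_MM c_eq
proof
  assume "\<exists>a>0. \<forall>p q. p \<le> q \<longrightarrow> (real p + 1) powr (b - \<mu>) * exp (TT p) \<le> a * ((real q + 1) powr (b - \<mu>) * exp (TT q))"
  then obtain a where a: "a > 0" and h: "\<forall>p q. p \<le> q \<longrightarrow> (real p + 1) powr (b - \<mu>) * exp (TT p) \<le> a * ((real q + 1) powr (b - \<mu>) * exp (TT q))"
    by blast
  define d where "d = \<mu> - b"
  have d: "d > 0" using assms d_def by simp
  have "filterlim (\<lambda>k::nat. ((real k + 2)/3) powr d) at_top sequentially"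
    using d by real_asymp
  then have "eventually (\<lambda>k. ((real k + 2)/3) powr d > a) sequentially"
    by (simp add: filterlim_at_top_dense)
  then obtain k where k: "((real k + 2)/3) powr d > a" by (auto simp: eventually_sequentially)
  let ?x = "real (qq k + 2)" and ?y = "real (qq (Suc k) + 1)"
  have le: "qq k + 1 \<le> qq (Suc k)" using strict_monoD[OF qq_sm, of k "Suc k"] by simp
  have "(real (qq k + 1) + 1) powr (b - \<mu>) * exp (TT (qq k + 1)) \<le> a * ((real (qq (Suc k)) + 1) powr (b - \<mu>) * exp (TT (qq (Suc k))))"
    using h le by blast
  then have "?x powr (-d) \<le> a * ?y powr (-d)"
    unfolding TT_flat d_def by (simp add: add.commute)
  then have "?y powr d \<le> a * ?x powr d"
    by (simp add: powr_minus field_simps)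
  then have "(?y / ?x) powr d \<le> a"
    by (simp add: powr_divide field_simps)
  moreover have "((real k + 2)/3) powr d \<le> (?y / ?x) powr d"
    using qq_ratio[of k] d by (intro powr_mono2) auto
  ultimately have "((real k + 2)/3) powr d \<le> a" by (rule order_trans[rotated])
  with k show False by simp
qed

theorem corollary4p13:
  fixes \<beta> :: real
  assumes "\<beta> \<ge> 0"
  shows "\<exists>M. weight_sequence M \<and> \<not> cond_sm M \<and> \<not> cond_dc M \<and> gamma_idx M = ereal \<beta>"
proof (intro exI conjI)
  show "weight_sequence (MM \<beta>)" by (rule ws[OF assms])
  show "\<not> cond_sm (MM \<beta>)" by (rule not_sm[OF assms])
  show "\<not> cond_dc (MM \<beta>)" by (rule not_dc[OF assms])
  have A: "{\<mu>. \<mu> > 0 \<and> almost_increasing (\<lambda>p. quot_seq (MM \<beta>) p / (real p + 1) powr \<mu>)} = {\<mu>. 0 < \<mu> \<and> \<mu> \<le> \<beta>}"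
    using ai_le ai_gt by (auto simp: not_le[symmetric])
  show "gamma_idx (MM \<beta>) = ereal \<beta>"
    unfolding gamma_idx_def A
  proof (rule antisym)
    show "Sup (insert 0 (ereal ` {\<mu>. 0 < \<mu> \<and> \<mu> \<le> \<beta>})) \<le> ereal \<beta>"
      using assms by (auto intro!: Sup_least)
    show "ereal \<beta> \<le> Sup (insert 0 (ereal ` {\<mu>. 0 < \<mu> \<and> \<mu> \<le> \<beta>}))"
    proof (cases "\<beta> = 0")
      case True then show ?thesis by (simp add: Sup_upper zero_ereal_def)
    next
      case False then show ?thesis using assms by (intro Sup_upper) auto
    qed
  qed
qed

end
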